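(* Let $(\mathcal C,\otimes,\mathbf 1)$ be a monoidal r-category, let $X\in\mathcal C$, and let $\mathrm{coev}_X:\mathbf 1\to X\otimes X^*$ be the canonical coevaluation morphism. Let $\mathrm{ev}_X:X^*\otimes X\to\mathbf 1$ be an arbitrary morphism. Then (suppressing associativity and unit constraints) the identity $$(\mathrm{id}_X\otimes \mathrm{ev}_X)\circ(\mathrm{coev}_X\otimes \mathrm{id}_X)=\mathrm{id}_X$$ holds if and only if the identity $$(\mathrm{ev}_X\otimes \mathrm{id}_{X^*})\circ(\mathrm{id}_{X^*}\otimes \mathrm{coev}_X)=\mathrm{id}_{X^*}$$ holds.
   Context: A monoidal category $(\mathcal C,\otimes,\mathbf 1)$ is called a monoidal r-category if (i) for every object $X$ the functor $Y\mapsto \mathrm{Hom}(\mathbf 1,X\otimes Y)$ is representable by an object $X^*$, i.e. there are isomorphisms $\mathrm{Hom}(\mathbf 1,X\otimes Y)\cong\mathrm{Hom}(X^*,Y)$ natural in $Y$; and (ii) the resulting functor $X\mapsto X^*$, $\mathcal C\to\mathcal C^{\mathrm{op}}$, is an equivalence of categories (its inverse is denoted $X\mapsto {}^*X$). The canonical coevaluation $\mathrm{coev}_X:\mathbf 1\to X\otimes X^*$ is the morphism corresponding to $\mathrm{id}_{X^*}$ under $\mathrm{Hom}(\mathbf 1,X\otimes X^* )\cong \mathrm{Hom}(X^*,X^* )$. *)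

theory Defs
  imports Main
begin

record ('o, 'm) moncat =
  Hom  :: "'o \<Rightarrow> 'o \<Rightarrow> 'm set"
  cmp  :: "'m \<Rightarrow> 'm \<Rightarrow> 'm"          \<comment> \<open>cmp g f = g \<circ> f\<close>
  idm  :: "'o \<Rightarrow> 'm"
  tobj :: "'o \<Rightarrow> 'o \<Rightarrow> 'o"
  tmor :: "'m \<Rightarrow> 'm \<Rightarrow> 'm"
  uobj :: "'o"
  asc  :: "'o \<Rightarrow> 'o \<Rightarrow> 'o \<Rightarrow> 'm"    \<comment> \<open>asc A B D : (A\<otimes>B)\<otimes>D \<rightarrow> A\<otimes>(B\<otimes>D)\<close>
  lun  :: "'o \<Rightarrow> 'm"                  \<comment> \<open>lun A : 1\<otimes>A \<rightarrow> A\<close>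
  run  :: "'o \<Rightarrow> 'm"                  \<comment> \<open>run A : A\<otimes>1 \<rightarrow> A\<close>

definition category :: "('o, 'm, 'z) moncat_scheme \<Rightarrow> bool" where
  "category C \<longleftrightarrow>
     (\<forall>A B A' B' f. f \<in> Hom C A B \<and> f \<in> Hom C A' B' \<longrightarrow> A = A' \<and> B = B') \<and>
     (\<forall>A. idm C A \<in> Hom C A A) \<and>
     (\<forall>A B D f g. f \<in> Hom C A B \<longrightarrow> g \<in> Hom C B D \<longrightarrow> cmp C g f \<in> Hom C A D) \<and>
     (\<forall>A B f. f \<in> Hom C A B \<longrightarrow> cmp C f (idm C A) = f \<and> cmp C (idm C B) f = f) \<and>
     (\<forall>A B D E f g h. f \<in> Hom C A B \<longrightarrow> g \<in> Hom C B D \<longrightarrow> h \<in> Hom C D E \<longrightarrow>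
        cmp C h (cmp C g f) = cmp C (cmp C h g) f)"

definition is_iso :: "('o, 'm, 'z) moncat_scheme \<Rightarrow> 'o \<Rightarrow> 'o \<Rightarrow> 'm \<Rightarrow> bool" where
  "is_iso C A B f \<longleftrightarrow> f \<in> Hom C A B \<and>
     (\<exists>g \<in> Hom C B A. cmp C g f = idm C A \<and> cmp C f g = idm C B)"

definition invm :: "('o, 'm, 'z) moncat_scheme \<Rightarrow> 'o \<Rightarrow> 'o \<Rightarrow> 'm \<Rightarrow> 'm" where
  "invm C A B f = (THE g. g \<in> Hom C B A \<and> cmp C g f = idm C A \<and> cmp C f g = idm C B)"

definition monoidal_cat :: "('o, 'm, 'z) moncat_scheme \<Rightarrow> bool" where
  "monoidal_cat C \<longleftrightarrow> category C \<and>
     \<comment> \<open>tensor is a bifunctor\<close>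
     (\<forall>A A' B B' f g. f \<in> Hom C A A' \<longrightarrow> g \<in> Hom C B B' \<longrightarrow>
        tmor C f g \<in> Hom C (tobj C A B) (tobj C A' B')) \<and>
     (\<forall>A B. tmor C (idm C A) (idm C B) = idm C (tobj C A B)) \<and>
     (\<forall>A A' A'' B B' B'' f f' g g'. f \<in> Hom C A A' \<longrightarrow> f' \<in> Hom C A' A'' \<longrightarrow>
        g \<in> Hom C B B' \<longrightarrow> g' \<in> Hom C B' B'' \<longrightarrow>
        tmor C (cmp C f' f) (cmp C g' g) = cmp C (tmor C f' g') (tmor C f g)) \<and>
     \<comment> \<open>associator: natural isomorphism\<close>
     (\<forall>A B D. is_iso C (tobj C (tobj C A B) D) (tobj C A (tobj C B D)) (asc C A B D)) \<and>
     (\<forall>A A' B B' D D' f g h. f \<in> Hom C A A' \<longrightarrow> g \<in> Hom C B B' \<longrightarrow> h \<in> Hom C D D' \<longrightarrow>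
        cmp C (asc C A' B' D') (tmor C (tmor C f g) h) =
        cmp C (tmor C f (tmor C g h)) (asc C A B D)) \<and>
     \<comment> \<open>unitors: natural isomorphisms\<close>
     (\<forall>A. is_iso C (tobj C (uobj C) A) A (lun C A)) \<and>
     (\<forall>A. is_iso C (tobj C A (uobj C)) A (run C A)) \<and>
     (\<forall>A B f. f \<in> Hom C A B \<longrightarrow>
        cmp C f (lun C A) = cmp C (lun C B) (tmor C (idm C (uobj C)) f)) \<and>
     (\<forall>A B f. f \<in> Hom C A B \<longrightarrow>
        cmp C f (run C A) = cmp C (run C B) (tmor C f (idm C (uobj C)))) \<and>
     \<comment> \<open>pentagon axiom\<close>
     (\<forall>A B D E.
        cmp C (asc C A B (tobj C D E)) (asc C (tobj C A B) D E) =
        cmp C (tmor C (idm C A) (asc C B D E))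
          (cmp C (asc C A (tobj C B D) E) (tmor C (asc C A B D) (idm C E)))) \<and>
     \<comment> \<open>triangle axiom\<close>
     (\<forall>A B. cmp C (tmor C (idm C A) (lun C B)) (asc C A (uobj C) B) =
        tmor C (run C A) (idm C B))"

text \<open>Condition (i): for every X, the functor Y \<mapsto> Hom(1, X\<otimes>Y) is represented by
  the object dual X, via bijections phi X Y : Hom(1, X\<otimes>Y) \<rightarrow> Hom(dual X, Y)
  natural in Y.\<close>
definition represents_duals ::
  "('o, 'm, 'z) moncat_scheme \<Rightarrow> ('o \<Rightarrow> 'o) \<Rightarrow> ('o \<Rightarrow> 'o \<Rightarrow> 'm \<Rightarrow> 'm) \<Rightarrow> bool" where
  "represents_duals C dual phi \<longleftrightarrow>
     (\<forall>X Y. bij_betw (phi X Y) (Hom C (uobj C) (tobj C X Y)) (Hom C (dual X) Y)) \<and>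
     (\<forall>X Y Y' h f. h \<in> Hom C Y Y' \<longrightarrow> f \<in> Hom C (uobj C) (tobj C X Y) \<longrightarrow>
        phi X Y' (cmp C (tmor C (idm C X) h) f) = cmp C h (phi X Y f))"

definition coev ::
  "('o, 'm, 'z) moncat_scheme \<Rightarrow> ('o \<Rightarrow> 'o) \<Rightarrow> ('o \<Rightarrow> 'o \<Rightarrow> 'm \<Rightarrow> 'm) \<Rightarrow> 'o \<Rightarrow> 'm" where
  "coev C dual phi X =
     (THE c. c \<in> Hom C (uobj C) (tobj C X (dual X)) \<and> phi X (dual X) c = idm C (dual X))"

text \<open>The action of X \<mapsto> X* on morphisms (determined by the representation via Yoneda):
  for f : X \<rightarrow> X', the morphism X'* \<rightarrow> X* corresponding to (f\<otimes>id) \<circ> coev_X.\<close>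
definition dual_mor ::
  "('o, 'm, 'z) moncat_scheme \<Rightarrow> ('o \<Rightarrow> 'o) \<Rightarrow> ('o \<Rightarrow> 'o \<Rightarrow> 'm \<Rightarrow> 'm) \<Rightarrow> 'o \<Rightarrow> 'o \<Rightarrow> 'm \<Rightarrow> 'm" where
  "dual_mor C dual phi X X' f =
     phi X' (dual X) (cmp C (tmor C f (idm C (dual X))) (coev C dual phi X))"

text \<open>Monoidal r-category: (i) representability and (ii) X \<mapsto> X* is an equivalence
  C \<rightarrow> C^op, i.e. fully faithful and essentially surjective.\<close>
definition r_category ::
  "('o, 'm, 'z) moncat_scheme \<Rightarrow> ('o \<Rightarrow> 'o) \<Rightarrow> ('o \<Rightarrow> 'o \<Rightarrow> 'm \<Rightarrow> 'm) \<Rightarrow> bool" where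
  "r_category C dual phi \<longleftrightarrow> monoidal_cat C \<and> represents_duals C dual phi \<and>
     (\<forall>X X'. bij_betw (dual_mor C dual phi X X') (Hom C X X') (Hom C (dual X') (dual X))) \<and>
     (\<forall>Y. \<exists>X f. is_iso C (dual X) Y f)"

end

theory Submission
  imports Defs
begin

locale MC =
  fixes C :: "('o, 'm, 'z) moncat_scheme"
  assumes mc: "monoidal_cat C"
begin

abbreviation cp (infixr "\<cdot>" 55) where "g \<cdot> f \<equiv> cmp C g f"
abbreviation tm (infix "\<otimes>" 60) where "f \<otimes> g \<equiv> tmor C f g"
abbreviation tob (infix "\<odot>" 65) where "A \<odot> B \<equiv> tobj C A B"
abbreviation "U \<equiv> uobj C"
abbreviation "ID A \<equiv> idm C A"
abbreviation "aa A B D \<equiv> asc C A B D"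
abbreviation "ll A \<equiv> lun C A"
abbreviation "rr A \<equiv> run C A"
abbreviation "ai A B D \<equiv> invm C ((A \<odot> B) \<odot> D) (A \<odot> (B \<odot> D)) (asc C A B D)"
abbreviation "li A \<equiv> invm C (U \<odot> A) A (lun C A)"
abbreviation "ri A \<equiv> invm C (A \<odot> U) A (run C A)"
abbreviation "Hm A B \<equiv> Hom C A B"

lemmas M = mc[unfolded monoidal_cat_def]
lemma cat: "category C" using M by (rule conjunct1)
lemmas K = cat[unfolded category_def]

lemma hom_uniq: "f \<in> Hm A B \<Longrightarrow> f \<in> Hm A' B' \<Longrightarrow> A = A' \<and> B = B'"
  using K[THEN conjunct1] by blast
lemma id_hom: "ID A \<in> Hm A A"
  by (rule K[THEN conjunct2, THEN conjunct1, rule_format])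
lemma comp_hom: "f \<in> Hm A B \<Longrightarrow> g \<in> Hm B D \<Longrightarrow> g \<cdot> f \<in> Hm A D"
  by (rule K[THEN conjunct2, THEN conjunct2, THEN conjunct1, rule_format])
lemma id_r0: "f \<in> Hm A B \<Longrightarrow> f \<cdot> ID A = f"
  using K[THEN conjunct2, THEN conjunct2, THEN conjunct2, THEN conjunct1, rule_format] by simp
lemma id_l0: "f \<in> Hm A B \<Longrightarrow> ID B \<cdot> f = f"
  using K[THEN conjunct2, THEN conjunct2, THEN conjunct2, THEN conjunct1, rule_format] by simp
lemma assoc0: "f \<in> Hm A B \<Longrightarrow> g \<in> Hm B D \<Longrightarrow> h \<in> Hm D E \<Longrightarrow> (h \<cdot> g) \<cdot> f = h \<cdot> (g \<cdot> f)"
  by (rule K[THEN conjunct2, THEN conjunct2, THEN conjunct2, THEN conjunct2, rule_format, symmetric])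

lemmas M2 = M[THEN conjunct2]
lemma tm_hom: "f \<in> Hm A A' \<Longrightarrow> g \<in> Hm B B' \<Longrightarrow> f \<otimes> g \<in> Hm (A \<odot> B) (A' \<odot> B')"
  by (rule M2[THEN conjunct1, rule_format])
lemmas M3 = M2[THEN conjunct2]
lemma tm_id: "ID A \<otimes> ID B = ID (A \<odot> B)"
  by (rule M3[THEN conjunct1, rule_format])
lemmas M4 = M3[THEN conjunct2]
lemma interchange0: "f \<in> Hm A A' \<Longrightarrow> f' \<in> Hm A' A'' \<Longrightarrow> g \<in> Hm B B' \<Longrightarrow> g' \<in> Hm B' B'' \<Longrightarrow>
   (f' \<cdot> f) \<otimes> (g' \<cdot> g) = (f' \<otimes> g') \<cdot> (f \<otimes> g)"
  by (rule M4[THEN conjunct1, rule_format])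
lemmas M5 = M4[THEN conjunct2]
lemma a_iso: "is_iso C ((A \<odot> B) \<odot> D) (A \<odot> (B \<odot> D)) (aa A B D)"
  by (rule M5[THEN conjunct1, rule_format])
lemmas M6 = M5[THEN conjunct2]
lemma nat_a0: "f \<in> Hm A A' \<Longrightarrow> g \<in> Hm B B' \<Longrightarrow> h \<in> Hm D D' \<Longrightarrow>
   aa A' B' D' \<cdot> ((f \<otimes> g) \<otimes> h) = (f \<otimes> (g \<otimes> h)) \<cdot> aa A B D"
  by (rule M6[THEN conjunct1, rule_format])
lemmas M7 = M6[THEN conjunct2]
lemma l_iso: "is_iso C (U \<odot> A) A (ll A)"
  by (rule M7[THEN conjunct1, rule_format])
lemmas M8 = M7[THEN conjunct2]
lemma r_iso: "is_iso C (A \<odot> U) A (rr A)"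
  by (rule M8[THEN conjunct1, rule_format])
lemmas M9 = M8[THEN conjunct2]
lemma nat_l0: "f \<in> Hm A B \<Longrightarrow> f \<cdot> ll A = ll B \<cdot> (ID U \<otimes> f)"
  by (rule M9[THEN conjunct1, rule_format])
lemmas M10 = M9[THEN conjunct2]
lemma nat_r0: "f \<in> Hm A B \<Longrightarrow> f \<cdot> rr A = rr B \<cdot> (f \<otimes> ID U)"
  by (rule M10[THEN conjunct1, rule_format])
lemmas M11 = M10[THEN conjunct2]
lemma pentagon: "aa A B (D \<odot> E) \<cdot> aa (A \<odot> B) D E =
        (ID A \<otimes> aa B D E) \<cdot> aa A (B \<odot> D) E \<cdot> (aa A B D \<otimes> ID E)"
  by (rule M11[THEN conjunct1, rule_format])
lemma triangle: "(ID A \<otimes> ll B) \<cdot> aa A U B = rr A \<otimes> ID B"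
  by (rule M11[THEN conjunct2, rule_format])

lemma inv_props:
  assumes "is_iso C A B f"
  shows "invm C A B f \<in> Hm B A \<and> invm C A B f \<cdot> f = ID A \<and> f \<cdot> invm C A B f = ID B"
proof -
  from assms obtain g where g: "g \<in> Hm B A" "g \<cdot> f = ID A" "f \<cdot> g = ID B" and f: "f \<in> Hm A B"
    unfolding is_iso_def by blast
  have uq: "g' = g" if "g' \<in> Hm B A" "g' \<cdot> f = ID A" "f \<cdot> g' = ID B" for g'
  proof -
    have "g' = g' \<cdot> (f \<cdot> g)" using id_r0[OF that(1)] g(3) by simp
    also have "\<dots> = (g' \<cdot> f) \<cdot> g" using assoc0[OF g(1) f that(1)] by simp
    also have "\<dots> = g" using id_l0[OF g(1)] that(2) by simp
    finally show ?thesis .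
  qed
  have "invm C A B f = g" unfolding invm_def
    by (rule the_equality) (use g uq in blast)+
  thus ?thesis using g by simp
qed

lemma iso_hom: "is_iso C A B f \<Longrightarrow> f \<in> Hm A B" unfolding is_iso_def by blast

lemma a_hom: "aa A B D \<in> Hm ((A \<odot> B) \<odot> D) (A \<odot> (B \<odot> D))" using iso_hom[OF a_iso] .
lemma l_hom: "ll A \<in> Hm (U \<odot> A) A" using iso_hom[OF l_iso] .
lemma r_hom: "rr A \<in> Hm (A \<odot> U) A" using iso_hom[OF r_iso] .
lemma ai_hom: "ai A B D \<in> Hm (A \<odot> (B \<odot> D)) ((A \<odot> B) \<odot> D)" using inv_props[OF a_iso] by blast
lemma li_hom: "li A \<in> Hm A (U \<odot> A)" using inv_props[OF l_iso] by blast
lemma ri_hom: "ri A \<in> Hm A (A \<odot> U)" using inv_props[OF r_iso] by blast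
lemma ai_a0: "ai A B D \<cdot> aa A B D = ID ((A \<odot> B) \<odot> D)" using inv_props[OF a_iso] by blast
lemma a_ai0: "aa A B D \<cdot> ai A B D = ID (A \<odot> (B \<odot> D))" using inv_props[OF a_iso] by blast
lemma li_l0: "li A \<cdot> ll A = ID (U \<odot> A)" using inv_props[OF l_iso] by blast
lemma l_li0: "ll A \<cdot> li A = ID A" using inv_props[OF l_iso] by blast
lemma ri_r0: "ri A \<cdot> rr A = ID (A \<odot> U)" using inv_props[OF r_iso] by blast
lemma r_ri0: "rr A \<cdot> ri A = ID A" using inv_props[OF r_iso] by blast

definition arr where "arr f \<longleftrightarrow> (\<exists>A B. f \<in> Hm A B)"
definition dom where "dom f = (THE A. \<exists>B. f \<in> Hm A B)"
definition cod where "cod f = (THE B. \<exists>A. f \<in> Hm A B)"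

lemma hom_dc: assumes "f \<in> Hm A B" shows "arr f" "dom f = A" "cod f = B"
proof -
  show "arr f" using assms unfolding arr_def by blast
  show "dom f = A" unfolding dom_def by (rule the_equality) (use assms hom_uniq in blast)+
  show "cod f = B" unfolding cod_def by (rule the_equality) (use assms hom_uniq in blast)+
qed

lemma arr_hom: "arr f \<Longrightarrow> f \<in> Hm (dom f) (cod f)"
  unfolding arr_def using hom_dc by blast

lemma arr_iff: "f \<in> Hm A B \<longleftrightarrow> arr f \<and> dom f = A \<and> cod f = B"
  using hom_dc arr_hom by metis

lemmas basic_dc[simp] = hom_dc[OF id_hom] hom_dc[OF a_hom] hom_dc[OF ai_hom]
  hom_dc[OF l_hom] hom_dc[OF li_hom] hom_dc[OF r_hom] hom_dc[OF ri_hom]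

lemma comp_dc[simp]:
  assumes "arr f" "arr g" "cod f = dom g"
  shows "arr (g \<cdot> f)" "dom (g \<cdot> f) = dom f" "cod (g \<cdot> f) = cod g"
  using hom_dc[OF comp_hom[OF arr_hom[OF assms(1)], of g "cod g"]] arr_hom[OF assms(2)] assms(3) by auto

lemma tm_dc[simp]:
  assumes "arr f" "arr g"
  shows "arr (f \<otimes> g)" "dom (f \<otimes> g) = dom f \<odot> dom g" "cod (f \<otimes> g) = cod f \<odot> cod g"
  using hom_dc[OF tm_hom[OF arr_hom[OF assms(1)] arr_hom[OF assms(2)]]] by auto

lemma assoc[simp]: "arr f \<Longrightarrow> arr g \<Longrightarrow> arr h \<Longrightarrow> cod f = dom g \<Longrightarrow> cod g = dom h \<Longrightarrow>
  (h \<cdot> g) \<cdot> f = h \<cdot> (g \<cdot> f)"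
  using assoc0 arr_hom by metis

lemma id_l[simp]: "arr f \<Longrightarrow> cod f = B \<Longrightarrow> ID B \<cdot> f = f"
  using id_l0 arr_hom by metis
lemma id_r[simp]: "arr f \<Longrightarrow> dom f = A \<Longrightarrow> f \<cdot> ID A = f"
  using id_r0 arr_hom by metis

declare tm_id[simp]

lemma interchange: "arr f \<Longrightarrow> arr f' \<Longrightarrow> cod f = dom f' \<Longrightarrow> arr g \<Longrightarrow> arr g' \<Longrightarrow> cod g = dom g' \<Longrightarrow>
   (f' \<cdot> f) \<otimes> (g' \<cdot> g) = (f' \<otimes> g') \<cdot> (f \<otimes> g)"
  using interchange0 arr_hom by metis

lemma split_l[simp]: "arr f \<Longrightarrow> arr g \<Longrightarrow> cod f = dom g \<Longrightarrow> ID A \<otimes> (g \<cdot> f) = (ID A \<otimes> g) \<cdot> (ID A \<otimes> f)"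
  using interchange[of "ID A" "ID A" f g] by simp
lemma split_r[simp]: "arr f \<Longrightarrow> arr g \<Longrightarrow> cod f = dom g \<Longrightarrow> (g \<cdot> f) \<otimes> ID A = (g \<otimes> ID A) \<cdot> (f \<otimes> ID A)"
  using interchange[of f g "ID A" "ID A"] by simp

lemma chain: assumes "g \<cdot> f = k \<cdot> h" "arr f" "arr g" "cod f = dom g" "arr h" "arr k" "cod h = dom k"
   "arr x" "cod x = dom f"
  shows "g \<cdot> (f \<cdot> x) = k \<cdot> (h \<cdot> x)"
proof -
  have "dom h = dom f" using comp_dc(2)[OF assms(2-4)] comp_dc(2)[OF assms(5-7)] assms(1) by simp
  note dh = this
  have 1: "(g \<cdot> f) \<cdot> x = g \<cdot> (f \<cdot> x)" by (rule assoc) (use assms in simp_all)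
  have 2: "(k \<cdot> h) \<cdot> x = k \<cdot> (h \<cdot> x)" by (rule assoc) (use assms dh in simp_all)
  show ?thesis using 1 2 assms(1) by metis
qed

lemma ai_a[simp]: "ai A B D \<cdot> aa A B D = ID ((A \<odot> B) \<odot> D)" by (rule ai_a0)
lemma a_ai[simp]: "aa A B D \<cdot> ai A B D = ID (A \<odot> (B \<odot> D))" by (rule a_ai0)
lemma li_l[simp]: "li A \<cdot> ll A = ID (U \<odot> A)" by (rule li_l0)
lemma l_li[simp]: "ll A \<cdot> li A = ID A" by (rule l_li0)
lemma ri_r[simp]: "ri A \<cdot> rr A = ID (A \<odot> U)" by (rule ri_r0)
lemma r_ri[simp]: "rr A \<cdot> ri A = ID A" by (rule r_ri0)

lemma ai_a_c[simp]: "arr x \<Longrightarrow> cod x = (A \<odot> B) \<odot> D \<Longrightarrow> ai A B D \<cdot> aa A B D \<cdot> x = x"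
  using chain[of "ai A B D" "aa A B D" "ID _" "ID _" x] by simp
lemma a_ai_c[simp]: "arr x \<Longrightarrow> cod x = A \<odot> (B \<odot> D) \<Longrightarrow> aa A B D \<cdot> ai A B D \<cdot> x = x"
  using chain[of "aa A B D" "ai A B D" "ID _" "ID _" x] by simp
lemma li_l_c[simp]: "arr x \<Longrightarrow> cod x = U \<odot> A \<Longrightarrow> li A \<cdot> ll A \<cdot> x = x"
  using chain[of "li A" "ll A" "ID _" "ID _" x] by simp
lemma l_li_c[simp]: "arr x \<Longrightarrow> cod x = A \<Longrightarrow> ll A \<cdot> li A \<cdot> x = x"
  using chain[of "ll A" "li A" "ID _" "ID _" x] by simp
lemma ri_r_c[simp]: "arr x \<Longrightarrow> cod x = A \<odot> U \<Longrightarrow> ri A \<cdot> rr A \<cdot> x = x"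
  using chain[of "ri A" "rr A" "ID _" "ID _" x] by simp
lemma r_ri_c[simp]: "arr x \<Longrightarrow> cod x = A \<Longrightarrow> rr A \<cdot> ri A \<cdot> x = x"
  using chain[of "rr A" "ri A" "ID _" "ID _" x] by simp

end

context MC begin

lemma nat_a: "arr f \<Longrightarrow> arr g \<Longrightarrow> arr h \<Longrightarrow>
  aa (cod f) (cod g) (cod h) \<cdot> ((f \<otimes> g) \<otimes> h) = (f \<otimes> (g \<otimes> h)) \<cdot> aa (dom f) (dom g) (dom h)"
  by (rule nat_a0; rule arr_hom)
lemma nat_l: "arr f \<Longrightarrow> f \<cdot> ll (dom f) = ll (cod f) \<cdot> (ID U \<otimes> f)"
  by (rule nat_l0; rule arr_hom)
lemma nat_r: "arr f \<Longrightarrow> f \<cdot> rr (dom f) = rr (cod f) \<cdot> (f \<otimes> ID U)"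
  by (rule nat_r0; rule arr_hom)

lemma conj_eq:
  assumes "p \<in> Hm A B" "G \<in> Hm A A'" "q \<in> Hm A' B'" "F \<in> Hm B B'" "pi \<in> Hm B A" "qi \<in> Hm B' A'"
    "qi \<cdot> q = ID A'" "p \<cdot> pi = ID B" "q \<cdot> G = F \<cdot> p"
  shows "G \<cdot> pi = qi \<cdot> F"
proof -
  have Gp: "G \<cdot> pi \<in> Hm B A'" using comp_hom assms(5,2) by blast
  have "G \<cdot> pi = (qi \<cdot> q) \<cdot> (G \<cdot> pi)" using id_l0[OF Gp] assms(7) by simp
  also have "\<dots> = qi \<cdot> (q \<cdot> (G \<cdot> pi))" using assoc0[OF Gp assms(3,6)] .
  also have "q \<cdot> (G \<cdot> pi) = (q \<cdot> G) \<cdot> pi" using assoc0[OF assms(5,2,3)] by simp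
  also have "\<dots> = (F \<cdot> p) \<cdot> pi" using assms(9) by simp
  also have "\<dots> = F \<cdot> (p \<cdot> pi)" using assoc0[OF assms(5,1,4)] .
  also have "\<dots> = F" using id_r0[OF assms(4)] assms(8) by simp
  finally show ?thesis .
qed

lemma nat_ai: assumes "arr f" "arr g" "arr h" shows
  "ai (cod f) (cod g) (cod h) \<cdot> (f \<otimes> (g \<otimes> h)) = ((f \<otimes> g) \<otimes> h) \<cdot> ai (dom f) (dom g) (dom h)"
  apply (rule sym, rule conj_eq[OF a_hom _ a_hom _ ai_hom ai_hom ai_a0 a_ai0])
  using assms nat_a[OF assms] by (simp_all add: arr_iff)
lemma nat_li: assumes "arr f" shows "(ID U \<otimes> f) \<cdot> li (dom f) = li (cod f) \<cdot> f"
  apply (rule conj_eq[OF l_hom _ l_hom _ li_hom li_hom li_l0 l_li0])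
  using assms nat_l[OF assms] by (simp_all add: arr_iff)
lemma nat_ri: assumes "arr f" shows "(f \<otimes> ID U) \<cdot> ri (dom f) = ri (cod f) \<cdot> f"
  apply (rule conj_eq[OF r_hom _ r_hom _ ri_hom ri_hom ri_r0 r_ri0])
  using assms nat_r[OF assms] by (simp_all add: arr_iff)

lemma l_faith: assumes "arr f" "arr g" "dom f = dom g" "cod f = cod g" "ID U \<otimes> f = ID U \<otimes> g"
  shows "f = g"
proof -
  have "f = f \<cdot> ll (dom f) \<cdot> li (dom f)" using assms by simp
  also have "\<dots> = ll (cod f) \<cdot> (ID U \<otimes> f) \<cdot> li (dom f)"
    using chain[OF nat_l[of f], of "li (dom f)"] assms by simp
  also have "\<dots> = ll (cod g) \<cdot> (ID U \<otimes> g) \<cdot> li (dom g)" using assms by simp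
  also have "\<dots> = g \<cdot> ll (dom g) \<cdot> li (dom g)"
    using chain[OF nat_l[of g], of "li (dom g)"] assms by simp
  also have "\<dots> = g" using assms by simp
  finally show ?thesis .
qed

lemma r_faith: assumes "arr f" "arr g" "dom f = dom g" "cod f = cod g" "f \<otimes> ID U = g \<otimes> ID U"
  shows "f = g"
proof -
  have "f = f \<cdot> rr (dom f) \<cdot> ri (dom f)" using assms by simp
  also have "\<dots> = rr (cod f) \<cdot> (f \<otimes> ID U) \<cdot> ri (dom f)"
    using chain[OF nat_r[of f], of "ri (dom f)"] assms by simp
  also have "\<dots> = rr (cod g) \<cdot> (g \<otimes> ID U) \<cdot> ri (dom g)" using assms by simp
  also have "\<dots> = g \<cdot> rr (dom g) \<cdot> ri (dom g)"
    using chain[OF nat_r[of g], of "ri (dom g)"] assms by simp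
  also have "\<dots> = g" using assms by simp
  finally show ?thesis .
qed


lemma chain1: assumes "g \<cdot> f = k" "arr f" "arr g" "cod f = dom g" "arr x" "cod x = dom f"
  shows "g \<cdot> (f \<cdot> x) = k \<cdot> x"
proof -
  have "(g \<cdot> f) \<cdot> x = g \<cdot> (f \<cdot> x)" by (rule assoc) (use assms in simp_all)
  thus ?thesis using assms(1) by simp
qed

lemma K2: "ll (A \<odot> B) \<cdot> aa U A B = ll A \<otimes> ID B"
proof -
  let ?P = "aa U (U \<odot> A) B \<cdot> (aa U U A \<otimes> ID B)"
  let ?Q = "(ai U U A \<otimes> ID B) \<cdot> ai U (U \<odot> A) B"
  have PQ: "?P \<cdot> ?Q = ID (U \<odot> ((U \<odot> A) \<odot> B))"
  proof -
    have "?P \<cdot> ?Q = aa U (U \<odot> A) B \<cdot> ((aa U U A \<otimes> ID B) \<cdot> (ai U U A \<otimes> ID B)) \<cdot> ai U (U \<odot> A) B"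
      by simp
    also have "(aa U U A \<otimes> ID B) \<cdot> (ai U U A \<otimes> ID B) = ID ((U \<odot> (U \<odot> A)) \<odot> B)"
      using split_r[of "ai U U A" "aa U U A" B] by simp
    finally show ?thesis by simp
  qed
  have pent: "aa U U (A \<odot> B) \<cdot> aa (U \<odot> U) A B =
        (ID U \<otimes> aa U A B) \<cdot> aa U (U \<odot> A) B \<cdot> (aa U U A \<otimes> ID B)" by (rule pentagon)
  have tri1: "(ID U \<otimes> ll (A \<odot> B)) \<cdot> aa U U (A \<odot> B) = rr U \<otimes> ID (A \<odot> B)" by (rule triangle)
  have tri2: "(ID U \<otimes> ll A) \<cdot> aa U U A = rr U \<otimes> ID A" by (rule triangle)
  have na1: "aa U A B \<cdot> ((rr U \<otimes> ID A) \<otimes> ID B) = (rr U \<otimes> ID (A \<odot> B)) \<cdot> aa (U \<odot> U) A B"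
    using nat_a[of "rr U" "ID A" "ID B"] by simp
  have na2: "aa U A B \<cdot> ((ID U \<otimes> ll A) \<otimes> ID B) = (ID U \<otimes> (ll A \<otimes> ID B)) \<cdot> aa U (U \<odot> A) B"
    using nat_a[of "ID U" "ll A" "ID B"] by simp
  have eq: "(ID U \<otimes> (ll (A \<odot> B) \<cdot> aa U A B)) \<cdot> ?P = (ID U \<otimes> (ll A \<otimes> ID B)) \<cdot> ?P"
  proof -
    have "(ID U \<otimes> (ll (A \<odot> B) \<cdot> aa U A B)) \<cdot> ?P
       = (ID U \<otimes> ll (A \<odot> B)) \<cdot> ((ID U \<otimes> aa U A B) \<cdot> aa U (U \<odot> A) B \<cdot> (aa U U A \<otimes> ID B))"
      by simp
    also have "\<dots> = (ID U \<otimes> ll (A \<odot> B)) \<cdot> aa U U (A \<odot> B) \<cdot> aa (U \<odot> U) A B"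
      using pent by simp
    also have "\<dots> = (rr U \<otimes> ID (A \<odot> B)) \<cdot> aa (U \<odot> U) A B"
      using chain1[OF tri1, of "aa (U \<odot> U) A B"] by simp
    also have "\<dots> = aa U A B \<cdot> ((rr U \<otimes> ID A) \<otimes> ID B)"
      using na1 by simp
    also have "\<dots> = aa U A B \<cdot> (((ID U \<otimes> ll A) \<cdot> aa U U A) \<otimes> ID B)"
      using tri2 by simp
    also have "\<dots> = aa U A B \<cdot> ((ID U \<otimes> ll A) \<otimes> ID B) \<cdot> (aa U U A \<otimes> ID B)"
      by simp
    also have "\<dots> = (ID U \<otimes> (ll A \<otimes> ID B)) \<cdot> ?P"
      using chain[OF na2, of "aa U U A \<otimes> ID B"] by simp
    finally show ?thesis .
  qed
  have fe: "ID U \<otimes> (ll (A \<odot> B) \<cdot> aa U A B) = ID U \<otimes> (ll A \<otimes> ID B)"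
  proof -
    have "ID U \<otimes> (ll (A \<odot> B) \<cdot> aa U A B) = (ID U \<otimes> (ll (A \<odot> B) \<cdot> aa U A B)) \<cdot> (?P \<cdot> ?Q)"
      using PQ by simp
    also have "\<dots> = ((ID U \<otimes> (ll (A \<odot> B) \<cdot> aa U A B)) \<cdot> ?P) \<cdot> ?Q"
      by (rule assoc[symmetric]) simp_all
    also have "\<dots> = ((ID U \<otimes> (ll A \<otimes> ID B)) \<cdot> ?P) \<cdot> ?Q" using eq by simp
    also have "\<dots> = (ID U \<otimes> (ll A \<otimes> ID B)) \<cdot> (?P \<cdot> ?Q)"
      by (rule assoc) simp_all
    also have "\<dots> = ID U \<otimes> (ll A \<otimes> ID B)" using PQ by simp
    finally show ?thesis .
  qed
  show ?thesis by (rule l_faith[OF _ _ _ _ fe]) simp_all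
qed


lemma K1: "(ID A \<otimes> rr B) \<cdot> aa A B U = rr (A \<odot> B)"
proof -
  have tri3: "(ID (A \<odot> B) \<otimes> ll U) \<cdot> aa (A \<odot> B) U U = rr (A \<odot> B) \<otimes> ID U" by (rule triangle)
  have na3: "aa A B U \<cdot> (ID (A \<odot> B) \<otimes> ll U) = (ID A \<otimes> (ID B \<otimes> ll U)) \<cdot> aa A B (U \<odot> U)"
    using nat_a[of "ID A" "ID B" "ll U"] by simp
  have pent2: "aa A B (U \<odot> U) \<cdot> aa (A \<odot> B) U U = (ID A \<otimes> aa B U U) \<cdot> aa A (B \<odot> U) U \<cdot> (aa A B U \<otimes> ID U)"
    by (rule pentagon)
  have tri4: "(ID B \<otimes> ll U) \<cdot> aa B U U = rr B \<otimes> ID U" by (rule triangle)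
  have "ID A \<otimes> ((ID B \<otimes> ll U) \<cdot> aa B U U) = ID A \<otimes> (rr B \<otimes> ID U)" using tri4 by simp
  then have t4: "(ID A \<otimes> (ID B \<otimes> ll U)) \<cdot> (ID A \<otimes> aa B U U) = ID A \<otimes> (rr B \<otimes> ID U)" by simp
  have na4: "aa A B U \<cdot> ((ID A \<otimes> rr B) \<otimes> ID U) = (ID A \<otimes> (rr B \<otimes> ID U)) \<cdot> aa A (B \<odot> U) U"
    using nat_a[of "ID A" "rr B" "ID U"] by simp
  have eq: "aa A B U \<cdot> (rr (A \<odot> B) \<otimes> ID U) = aa A B U \<cdot> ((ID A \<otimes> rr B) \<otimes> ID U) \<cdot> (aa A B U \<otimes> ID U)"
  proof -
    have "aa A B U \<cdot> (rr (A \<odot> B) \<otimes> ID U) = aa A B U \<cdot> (ID (A \<odot> B) \<otimes> ll U) \<cdot> aa (A \<odot> B) U U"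
      using tri3 by simp
    also have "\<dots> = (ID A \<otimes> (ID B \<otimes> ll U)) \<cdot> aa A B (U \<odot> U) \<cdot> aa (A \<odot> B) U U"
      using chain[OF na3, of "aa (A \<odot> B) U U"] by simp
    also have "\<dots> = (ID A \<otimes> (ID B \<otimes> ll U)) \<cdot> (ID A \<otimes> aa B U U) \<cdot> aa A (B \<odot> U) U \<cdot> (aa A B U \<otimes> ID U)"
      using pent2 by simp
    also have "\<dots> = (ID A \<otimes> (rr B \<otimes> ID U)) \<cdot> aa A (B \<odot> U) U \<cdot> (aa A B U \<otimes> ID U)"
      using chain1[OF t4, of "aa A (B \<odot> U) U \<cdot> (aa A B U \<otimes> ID U)"] by simp
    also have "\<dots> = aa A B U \<cdot> ((ID A \<otimes> rr B) \<otimes> ID U) \<cdot> (aa A B U \<otimes> ID U)"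
      using chain[OF na4, of "aa A B U \<otimes> ID U"] by simp
    finally show ?thesis .
  qed
  have "ai A B U \<cdot> aa A B U \<cdot> (rr (A \<odot> B) \<otimes> ID U) = ai A B U \<cdot> aa A B U \<cdot> ((ID A \<otimes> rr B) \<otimes> ID U) \<cdot> (aa A B U \<otimes> ID U)"
    using eq by simp
  then have fe: "rr (A \<odot> B) \<otimes> ID U = ((ID A \<otimes> rr B) \<cdot> aa A B U) \<otimes> ID U" by simp
  show ?thesis by (rule sym, rule r_faith[OF _ _ _ _ fe]) simp_all
qed

lemma K3: "ll U = rr U"
proof -
  have "li U \<cdot> ll U \<cdot> ll (U \<odot> U) = li U \<cdot> ll U \<cdot> (ID U \<otimes> ll U)"
    using nat_l[of "ll U"] by simp
  then have a: "ll (U \<odot> U) = ID U \<otimes> ll U" by simp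
  have b: "(ID U \<otimes> ll U) \<cdot> aa U U U = ll U \<otimes> ID U" using K2[of U U] a by simp
  have "ll U \<otimes> ID U = rr U \<otimes> ID U" using b triangle[of U U] by simp
  then show ?thesis by (rule r_faith[rotated 4]) simp_all
qed


lemma main:
  assumes c: "c \<in> Hm U (X \<odot> D)" and e: "e \<in> Hm (D \<odot> X) U"
  shows "(ID X \<otimes> (ll D \<cdot> (e \<otimes> ID D) \<cdot> ai D X D \<cdot> (ID D \<otimes> c) \<cdot> ri D)) \<cdot> c
       = ((rr X \<cdot> (ID X \<otimes> e) \<cdot> aa X D X \<cdot> (c \<otimes> ID X) \<cdot> li X) \<otimes> ID D) \<cdot> c"
proof -
  note cd[simp] = hom_dc[OF c] and ed[simp] = hom_dc[OF e]
  let ?M = "(ID X \<otimes> ll D) \<cdot> (ID X \<otimes> (e \<otimes> ID D)) \<cdot> (ID X \<otimes> ai D X D) \<cdot> aa X D (X \<odot> D) \<cdot> (c \<otimes> c) \<cdot> ri U"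
  have cc1: "c \<otimes> c = (ID (X \<odot> D) \<otimes> c) \<cdot> (c \<otimes> ID U)"
    using interchange[of c "ID (X \<odot> D)" "ID U" c] by simp
  have cc2: "c \<otimes> c = (c \<otimes> ID (X \<odot> D)) \<cdot> (ID U \<otimes> c)"
    using interchange[of "ID U" c c "ID (X \<odot> D)"] by simp
  have F1: "(c \<otimes> ID U) \<cdot> ri U = ri (X \<odot> D) \<cdot> c" using nat_ri[of c] by simp
  have F2: "aa X D (X \<odot> D) \<cdot> (ID (X \<odot> D) \<otimes> c) = (ID X \<otimes> (ID D \<otimes> c)) \<cdot> aa X D U"
    using nat_a[of "ID X" "ID D" c] by simp
  have F3: "aa X D U \<cdot> ri (X \<odot> D) = ID X \<otimes> ri D"
  proof -
    have "aa X D U \<cdot> ri (X \<odot> D) = (ID X \<otimes> ri D) \<cdot> (ID X \<otimes> rr D) \<cdot> aa X D U \<cdot> ri (X \<odot> D)"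
    proof -
      have "(ID X \<otimes> ri D) \<cdot> (ID X \<otimes> rr D) = ID (X \<odot> (D \<odot> U))"
        using split_l[of "rr D" "ri D" X] by simp
      then show ?thesis using chain1[of "ID X \<otimes> ri D" "ID X \<otimes> rr D" "ID (X \<odot> (D \<odot> U))"] by simp
    qed
    also have "\<dots> = (ID X \<otimes> ri D) \<cdot> rr (X \<odot> D) \<cdot> ri (X \<odot> D)"
      using chain1[OF K1[of X D], of "ri (X \<odot> D)"] by simp
    also have "\<dots> = ID X \<otimes> ri D" by simp
    finally show ?thesis .
  qed
  have phi: "(ID X \<otimes> (ll D \<cdot> (e \<otimes> ID D) \<cdot> ai D X D \<cdot> (ID D \<otimes> c) \<cdot> ri D)) \<cdot> c = ?M"
  proof -
    have "?M = (ID X \<otimes> ll D) \<cdot> (ID X \<otimes> (e \<otimes> ID D)) \<cdot> (ID X \<otimes> ai D X D) \<cdot> aa X D (X \<odot> D) \<cdot> (ID (X \<odot> D) \<otimes> c) \<cdot> (c \<otimes> ID U) \<cdot> ri U"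
      using cc1 by simp
    also have "\<dots> = (ID X \<otimes> ll D) \<cdot> (ID X \<otimes> (e \<otimes> ID D)) \<cdot> (ID X \<otimes> ai D X D) \<cdot> aa X D (X \<odot> D) \<cdot> (ID (X \<odot> D) \<otimes> c) \<cdot> ri (X \<odot> D) \<cdot> c"
      using F1 by simp
    also have "\<dots> = (ID X \<otimes> ll D) \<cdot> (ID X \<otimes> (e \<otimes> ID D)) \<cdot> (ID X \<otimes> ai D X D) \<cdot> (ID X \<otimes> (ID D \<otimes> c)) \<cdot> aa X D U \<cdot> ri (X \<odot> D) \<cdot> c"
      using chain[OF F2, of "ri (X \<odot> D) \<cdot> c"] by simp
    also have "\<dots> = (ID X \<otimes> ll D) \<cdot> (ID X \<otimes> (e \<otimes> ID D)) \<cdot> (ID X \<otimes> ai D X D) \<cdot> (ID X \<otimes> (ID D \<otimes> c)) \<cdot> (ID X \<otimes> ri D) \<cdot> c"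
      using chain1[OF F3, of c] by simp
    also have "\<dots> = (ID X \<otimes> (ll D \<cdot> (e \<otimes> ID D) \<cdot> ai D X D \<cdot> (ID D \<otimes> c) \<cdot> ri D)) \<cdot> c"
      by simp
    finally show ?thesis by simp
  qed
  have G1: "(ID X \<otimes> ai D X D) \<cdot> aa X D (X \<odot> D) = aa X (D \<odot> X) D \<cdot> (aa X D X \<otimes> ID D) \<cdot> ai (X \<odot> D) X D"
  proof -
    have ia: "(ID X \<otimes> ai D X D) \<cdot> (ID X \<otimes> aa D X D) = ID (X \<odot> ((D \<odot> X) \<odot> D))"
      using split_l[of "aa D X D" "ai D X D" X] by simp
    have "(ID X \<otimes> ai D X D) \<cdot> aa X D (X \<odot> D) = (ID X \<otimes> ai D X D) \<cdot> aa X D (X \<odot> D) \<cdot> aa (X \<odot> D) X D \<cdot> ai (X \<odot> D) X D"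
      by simp
    also have "\<dots> = (ID X \<otimes> ai D X D) \<cdot> (ID X \<otimes> aa D X D) \<cdot> aa X (D \<odot> X) D \<cdot> (aa X D X \<otimes> ID D) \<cdot> ai (X \<odot> D) X D"
      using chain[OF pentagon[of X D X D], of "ai (X \<odot> D) X D"] by simp
    also have "\<dots> = aa X (D \<odot> X) D \<cdot> (aa X D X \<otimes> ID D) \<cdot> ai (X \<odot> D) X D"
      using chain1[OF ia, of "aa X (D \<odot> X) D \<cdot> (aa X D X \<otimes> ID D) \<cdot> ai (X \<odot> D) X D"] by simp
    finally show ?thesis .
  qed
  have G2: "(ID X \<otimes> (e \<otimes> ID D)) \<cdot> aa X (D \<odot> X) D = aa X U D \<cdot> ((ID X \<otimes> e) \<otimes> ID D)"
    using nat_a[of "ID X" e "ID D"] by simp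
  have G3: "(ID X \<otimes> ll D) \<cdot> aa X U D = rr X \<otimes> ID D" by (rule triangle)
  have H2: "ai (X \<odot> D) X D \<cdot> (c \<otimes> ID (X \<odot> D)) = ((c \<otimes> ID X) \<otimes> ID D) \<cdot> ai U X D"
    using nat_ai[of c "ID X" "ID D"] by simp
  have H3: "(ID U \<otimes> c) \<cdot> ri U = li (X \<odot> D) \<cdot> c"
    using nat_li[of c] K3 by simp
  have H4: "ai U X D \<cdot> li (X \<odot> D) = li X \<otimes> ID D"
  proof -
    have il: "(li X \<otimes> ID D) \<cdot> (ll X \<otimes> ID D) = ID ((U \<odot> X) \<odot> D)"
      using split_r[of "ll X" "li X" D] by simp
    have "ai U X D \<cdot> li (X \<odot> D) = (li X \<otimes> ID D) \<cdot> (ll X \<otimes> ID D) \<cdot> ai U X D \<cdot> li (X \<odot> D)"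
      using chain1[OF il, of "ai U X D \<cdot> li (X \<odot> D)"] by simp
    also have "\<dots> = (li X \<otimes> ID D) \<cdot> ll (X \<odot> D) \<cdot> aa U X D \<cdot> ai U X D \<cdot> li (X \<odot> D)"
      by (simp add: K2[of X D, symmetric])
    also have "\<dots> = li X \<otimes> ID D" by simp
    finally show ?thesis .
  qed
  have psi: "?M = ((rr X \<cdot> (ID X \<otimes> e) \<cdot> aa X D X \<cdot> (c \<otimes> ID X) \<cdot> li X) \<otimes> ID D) \<cdot> c"
  proof -
    have "?M = (ID X \<otimes> ll D) \<cdot> (ID X \<otimes> (e \<otimes> ID D)) \<cdot> aa X (D \<odot> X) D \<cdot> (aa X D X \<otimes> ID D) \<cdot> ai (X \<odot> D) X D \<cdot> (c \<otimes> c) \<cdot> ri U"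
      using chain[OF G1, of "(c \<otimes> c) \<cdot> ri U"] by simp
    also have "\<dots> = (ID X \<otimes> ll D) \<cdot> aa X U D \<cdot> ((ID X \<otimes> e) \<otimes> ID D) \<cdot> (aa X D X \<otimes> ID D) \<cdot> ai (X \<odot> D) X D \<cdot> (c \<otimes> c) \<cdot> ri U"
      using chain[OF G2, of "(aa X D X \<otimes> ID D) \<cdot> ai (X \<odot> D) X D \<cdot> (c \<otimes> c) \<cdot> ri U"] by simp
    also have "\<dots> = (rr X \<otimes> ID D) \<cdot> ((ID X \<otimes> e) \<otimes> ID D) \<cdot> (aa X D X \<otimes> ID D) \<cdot> ai (X \<odot> D) X D \<cdot> (c \<otimes> c) \<cdot> ri U"
      using chain1[OF G3, of "((ID X \<otimes> e) \<otimes> ID D) \<cdot> (aa X D X \<otimes> ID D) \<cdot> ai (X \<odot> D) X D \<cdot> (c \<otimes> c) \<cdot> ri U"] by simp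
    also have "\<dots> = (rr X \<otimes> ID D) \<cdot> ((ID X \<otimes> e) \<otimes> ID D) \<cdot> (aa X D X \<otimes> ID D) \<cdot> ai (X \<odot> D) X D \<cdot> (c \<otimes> ID (X \<odot> D)) \<cdot> (ID U \<otimes> c) \<cdot> ri U"
      using cc2 by simp
    also have "\<dots> = (rr X \<otimes> ID D) \<cdot> ((ID X \<otimes> e) \<otimes> ID D) \<cdot> (aa X D X \<otimes> ID D) \<cdot> ((c \<otimes> ID X) \<otimes> ID D) \<cdot> ai U X D \<cdot> (ID U \<otimes> c) \<cdot> ri U"
      using chain[OF H2, of "(ID U \<otimes> c) \<cdot> ri U"] by simp
    also have "\<dots> = (rr X \<otimes> ID D) \<cdot> ((ID X \<otimes> e) \<otimes> ID D) \<cdot> (aa X D X \<otimes> ID D) \<cdot> ((c \<otimes> ID X) \<otimes> ID D) \<cdot> ai U X D \<cdot> li (X \<odot> D) \<cdot> c"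
      using H3 by simp
    also have "\<dots> = (rr X \<otimes> ID D) \<cdot> ((ID X \<otimes> e) \<otimes> ID D) \<cdot> (aa X D X \<otimes> ID D) \<cdot> ((c \<otimes> ID X) \<otimes> ID D) \<cdot> (li X \<otimes> ID D) \<cdot> c"
      using chain1[OF H4, of c] by simp
    also have "\<dots> = ((rr X \<cdot> (ID X \<otimes> e) \<cdot> aa X D X \<cdot> (c \<otimes> ID X) \<cdot> li X) \<otimes> ID D) \<cdot> c"
      by simp
    finally show ?thesis .
  qed
  show ?thesis using phi psi by simp
qed

end

theorem lemma2p6:
  fixes C :: "('o, 'm, 'z) moncat_scheme"
    and dual :: "'o \<Rightarrow> 'o" and phi :: "'o \<Rightarrow> 'o \<Rightarrow> 'm \<Rightarrow> 'm"
    and X :: 'o and ev :: 'm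
  assumes "r_category C dual phi"
    and "ev \<in> Hom C (tobj C (dual X) X) (uobj C)"
  shows "cmp C (run C X)
           (cmp C (tmor C (idm C X) ev)
             (cmp C (asc C X (dual X) X)
               (cmp C (tmor C (coev C dual phi X) (idm C X))
                 (invm C (tobj C (uobj C) X) X (lun C X))))) = idm C X
     \<longleftrightarrow>
         cmp C (lun C (dual X))
           (cmp C (tmor C ev (idm C (dual X)))
             (cmp C (invm C (tobj C (tobj C (dual X) X) (dual X)) (tobj C (dual X) (tobj C X (dual X)))
                       (asc C (dual X) X (dual X)))
               (cmp C (tmor C (idm C (dual X)) (coev C dual phi X))
                 (invm C (tobj C (dual X) (uobj C)) (dual X) (run C (dual X)))))) = idm C (dual X)"
proof -
  have rc: "monoidal_cat C" "represents_duals C dual phi"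
    "\<forall>X X'. bij_betw (dual_mor C dual phi X X') (Hom C X X') (Hom C (dual X') (dual X))"
    using assms(1) unfolding r_category_def by blast+
  interpret MC C by (rule MC.intro) (rule rc(1))
  define D where "D = dual X"
  define c where "c = coev C dual phi X"
  have bij: "bij_betw (phi X D) (Hm U (X \<odot> D)) (Hm D D)"
    using rc(2) unfolding represents_duals_def D_def by blast
  have natphi: "\<And>Y Y' h f. h \<in> Hm Y Y' \<Longrightarrow> f \<in> Hm U (X \<odot> Y) \<Longrightarrow>
        phi X Y' ((ID X \<otimes> h) \<cdot> f) = h \<cdot> phi X Y f"
    using rc(2) unfolding represents_duals_def D_def by blast
  have cprop: "c \<in> Hm U (X \<odot> D) \<and> phi X D c = ID D"
  proof -
    have "ID D \<in> phi X D ` Hm U (X \<odot> D)" using bij id_hom unfolding bij_betw_def by blast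
    then obtain c0 where c0: "c0 \<in> Hm U (X \<odot> D)" "phi X D c0 = ID D" by (metis imageE)
    have "c = c0" unfolding c_def coev_def D_def[symmetric]
    proof (rule the_equality)
      show "c0 \<in> Hm U (X \<odot> D) \<and> phi X D c0 = ID D" using c0 by blast
      fix c1 assume "c1 \<in> Hm U (X \<odot> D) \<and> phi X D c1 = ID D"
      then show "c1 = c0" using c0 bij unfolding bij_betw_def inj_on_def by metis
    qed
    then show ?thesis using c0 by simp
  qed
  have c: "c \<in> Hm U (X \<odot> D)" and pc: "phi X D c = ID D" using cprop by auto
  have e: "ev \<in> Hm (D \<odot> X) U" using assms(2) unfolding D_def .
  note cd[simp] = hom_dc[OF c] and ed[simp] = hom_dc[OF e]
  define Z1 where "Z1 = rr X \<cdot> (ID X \<otimes> ev) \<cdot> aa X D X \<cdot> (c \<otimes> ID X) \<cdot> li X"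
  define Z2 where "Z2 = ll D \<cdot> (ev \<otimes> ID D) \<cdot> ai D X D \<cdot> (ID D \<otimes> c) \<cdot> ri D"
  have Z1h: "Z1 \<in> Hm X X" unfolding Z1_def arr_iff by simp
  have Z2h: "Z2 \<in> Hm D D" unfolding Z2_def arr_iff by simp
  have mn: "(ID X \<otimes> Z2) \<cdot> c = (Z1 \<otimes> ID D) \<cdot> c"
    unfolding Z1_def Z2_def by (rule main[OF c e])
  have p2: "phi X D ((ID X \<otimes> Z2) \<cdot> c) = Z2"
    using natphi[OF Z2h c] pc id_r0[OF Z2h] by simp
  have dm: "dual_mor C dual phi X X f = phi X D ((f \<otimes> ID D) \<cdot> c)" for f
    unfolding dual_mor_def c_def D_def ..
  have inj: "inj_on (dual_mor C dual phi X X) (Hm X X)"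
    using rc(3) unfolding bij_betw_def by blast
  have "Z1 = ID X \<longleftrightarrow> Z2 = ID D"
  proof
    assume "Z1 = ID X"
    then have "(Z1 \<otimes> ID D) \<cdot> c = c" by simp
    then show "Z2 = ID D" using p2 mn pc by simp
  next
    assume z2: "Z2 = ID D"
    then have "(ID X \<otimes> Z2) \<cdot> c = c" by simp
    then have "dual_mor C dual phi X X Z1 = ID D" using dm[of Z1] mn pc by simp
    moreover have "dual_mor C dual phi X X (ID X) = ID D" using dm[of "ID X"] pc by simp
    ultimately show "Z1 = ID X" using inj Z1h id_hom unfolding inj_on_def by metis
  qed
  then show ?thesis unfolding Z1_def Z2_def c_def D_def .
qed

end
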